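(* For every integer $k\ge2$, with $d=k(k-1)/2$, there exist linear operators $A_1,\ldots,A_k\colon\mathbb{R}^k\to\mathbb{R}^d$ such that for every $x\in\mathbb{R}^k$ the vectors $A_1x,\ldots,A_kx$ are linearly dependent, while for every nonzero $x=(x_1,\ldots,x_k)\in\mathbb{R}^k$ the operator $\sum_{i=1}^kx_iA_i$ has rank exactly $k-1$. In particular, no nontrivial linear combination of $A_1,\ldots,A_k$ has rank less than $k-1$. *)

theory Defs
  imports "HOL-Analysis.Analysis"
begin

end

theory Submission
  imports Defs
begin

lemma rank_null:
  fixes M :: "real^'k^'d"
  shows "rank M + dim {y. M *v y = 0} = CARD('k)"
proof -
  have eq: "{y \<in> UNIV. \<forall>r \<in> span (rows M). orthogonal r y} = {y. M *v y = 0}"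
  proof (intro set_eqI iffI)
    fix y assume "y \<in> {y \<in> UNIV. \<forall>r \<in> span (rows M). orthogonal r y}"
    then have "\<forall>i. orthogonal (row i M) y" by (auto simp: rows_def intro: span_base)
    then show "y \<in> {y. M *v y = 0}"
      by (simp add: vec_eq_iff matrix_vector_mul_component orthogonal_def row_def vec_lambda_eta)
  next
    fix y assume "y \<in> {y. M *v y = 0}"
    then show "y \<in> {y \<in> UNIV. \<forall>r \<in> span (rows M). orthogonal r y}"
      using orthogonal_nullspace_rowspace orthogonal_commute by blast
  qed
  have "dim {y \<in> UNIV. \<forall>r \<in> span (rows M). orthogonal r y} + dim (span (rows M)) = dim (UNIV :: (real^'k) set)"
    by (rule dim_subspace_orthogonal_to_vectors) auto
  then show ?thesis using eq by (simp add: row_rank_def)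
qed

lemma card_half:
  fixes e :: "'k::finite \<Rightarrow> nat"
  assumes "inj e"
  shows "2 * card {(a,b). e a < e b} = CARD('k) * (CARD('k) - 1)"
proof -
  let ?P = "{(a,b). e a < e b}" and ?Q = "{(a,b). e b < e a}" and ?D = "{p::('k\<times>'k). fst p = snd p}"
  have U: "(UNIV :: ('k\<times>'k) set) = ?P \<union> ?Q \<union> ?D"
    using assms by (auto simp: inj_eq) (metis linorder_neqE_nat injD)
  have cQ: "card ?Q = card ?P"
  proof -
    have "?Q = prod.swap ` ?P" by auto
    then show ?thesis by (simp add: card_image)
  qed
  have cD: "card ?D = CARD('k)"
  proof -
    have "?D = (\<lambda>a. (a,a)) ` UNIV" by auto
    then show ?thesis by (simp add: card_image inj_on_def)
  qed
  have "CARD('k) * CARD('k) = card (?P \<union> ?Q \<union> ?D)"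
    by (simp flip: U add: card_cartesian_product flip: UNIV_Times_UNIV)
  also have "\<dots> = card ?P + card ?Q + card ?D"
    by (subst card_Un_disjoint; (auto simp: card_Un_disjoint)?)+
  finally show ?thesis using cQ cD by (simp add: algebra_simps diff_mult_distrib2)
qed

lemma construction:
  fixes p :: "'d::finite \<Rightarrow> 'k::finite \<times> 'k" and e :: "'k \<Rightarrow> nat"
  assumes inj: "inj e" and pP: "\<And>a b. e a < e b \<Longrightarrow> \<exists>r. p r = (a,b)"
  defines "A \<equiv> \<lambda>i. (\<chi> r c. (if i = fst (p r) \<and> c = snd (p r) then 1 else 0)
                      - (if i = snd (p r) \<and> c = fst (p r) then 1 else 0)) :: real^'k^'d"
  shows "(\<forall>x :: real^'k. \<exists>c :: 'k \<Rightarrow> real.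
              (\<exists>i. c i \<noteq> 0) \<and> (\<Sum>i\<in>UNIV. c i *\<^sub>R (A i *v x)) = 0)
         \<and> (\<forall>x :: real^'k. x \<noteq> 0 \<longrightarrow>
              rank (\<Sum>i\<in>UNIV. (x $ i) *\<^sub>R A i) + 1 = CARD('k))"
proof -
  have Av: "(A i *v y) $ r = (if i = fst (p r) then y $ snd (p r) else 0) - (if i = snd (p r) then y $ fst (p r) else 0)" for i y r
    by (cases "i = fst (p r)"; cases "i = snd (p r)")
       (simp_all add: A_def matrix_vector_mult_def left_diff_distrib sum_subtractf if_distrib[of "\<lambda>u. u * z" for z] sum.delta' cong: if_cong)
  have S: "(\<Sum>i\<in>UNIV. c i *\<^sub>R (A i *v y)) $ r = c (fst (p r)) * y $ snd (p r) - c (snd (p r)) * y $ fst (p r)" for c y r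
    by (simp add: sum_component Av right_diff_distrib sum_subtractf if_distrib[of "\<lambda>u. z * u" for z] sum.delta' del: if_image_distrib cong: if_cong)
  have S2: "(\<Sum>i\<in>UNIV. c i * (A i *v y) $ r) = c (fst (p r)) * y $ snd (p r) - c (snd (p r)) * y $ fst (p r)" for c y r
    using S[of c y r] by (simp add: sum_component)
  have M: "((\<Sum>i\<in>UNIV. (x $ i) *\<^sub>R A i) *v y) = (\<Sum>i\<in>UNIV. x $ i *\<^sub>R (A i *v y))" for x y
    by (simp add: vec_eq_iff matrix_vector_mult_def sum_component sum_distrib_left sum_distrib_right mult.assoc)
       (subst sum.swap, simp add: mult_ac)
  show ?thesis
  proof (intro conjI allI impI)
    fix x :: "real^'k"
    show "\<exists>c :: 'k \<Rightarrow> real. (\<exists>i. c i \<noteq> 0) \<and> (\<Sum>i\<in>UNIV. c i *\<^sub>R (A i *v x)) = 0"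
    proof (cases "x = 0")
      case True
      then show ?thesis by (intro exI[of _ "\<lambda>_. 1"]) simp
    next
      case False
      then obtain j where "x $ j \<noteq> 0" by (metis vec_eq_iff zero_index)
      then show ?thesis
        by (intro exI[of _ "\<lambda>i. x $ i"]) (auto simp: vec_eq_iff S2)
    qed
  next
    fix x :: "real^'k" assume "x \<noteq> 0"
    then obtain j where xj: "x $ j \<noteq> 0" by (metis vec_eq_iff zero_index)
    let ?M = "\<Sum>i\<in>UNIV. (x $ i) *\<^sub>R A i"
    have K: "{y. ?M *v y = 0} = span {x}"
    proof (intro set_eqI iffI)
      fix y assume "y \<in> {y. ?M *v y = 0}"
      then have h: "\<forall>r. x $ fst (p r) * y $ snd (p r) = x $ snd (p r) * y $ fst (p r)"
        by (simp add: M vec_eq_iff S2)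
      have all: "x $ a * y $ b = x $ b * y $ a" for a b
      proof -
        consider "e a < e b" | "e b < e a" | "a = b" using inj by (metis linorder_neqE_nat injD)
        then show ?thesis
        proof cases
          case 1 then obtain r where "p r = (a,b)" using pP by blast
          then show ?thesis using h[rule_format, of r] by simp
        next
          case 2 then obtain r where "p r = (b,a)" using pP by blast
          then show ?thesis using h[rule_format, of r] by simp
        qed simp
      qed
      have "y = (y $ j / x $ j) *\<^sub>R x"
        using all[of j] xj by (simp add: vec_eq_iff field_simps)
      then show "y \<in> span {x}"
        by (metis span_base span_scale singletonI)
    next
      fix y assume "y \<in> span {x}"
      then obtain t where "y = t *\<^sub>R x" by (auto simp: span_singleton)
      then show "y \<in> {y. ?M *v y = 0}"
        by (simp add: M vec_eq_iff S2)
    qed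
    have "dim (span {x}) = 1" using \<open>x \<noteq> 0\<close> by simp
    then show "rank ?M + 1 = CARD('k)" using rank_null[of ?M] K by simp
  qed
qed

theorem mainTheorem8:
  assumes "CARD('k::finite) \<ge> 2"
    and "CARD('d::finite) = CARD('k) * (CARD('k) - 1) div 2"
  shows "\<exists>A :: 'k \<Rightarrow> real^'k^'d.
           (\<forall>x :: real^'k. \<exists>c :: 'k \<Rightarrow> real.
              (\<exists>i. c i \<noteq> 0) \<and> (\<Sum>i\<in>UNIV. c i *\<^sub>R (A i *v x)) = 0)
         \<and> (\<forall>x :: real^'k. x \<noteq> 0 \<longrightarrow>
              rank (\<Sum>i\<in>UNIV. (x $ i) *\<^sub>R A i) = CARD('k) - 1)"
proof -
  obtain e :: "'k \<Rightarrow> nat" where "bij_betw e UNIV {0..<CARD('k)}"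
    using ex_bij_betw_finite_nat[of "UNIV :: 'k set"] by auto
  then have inj: "inj e" by (simp add: bij_betw_def)
  let ?P = "{(a,b). e a < e b}"
  have "card (UNIV :: 'd set) = card ?P"
    using card_half[OF inj] assms(2) by simp
  then obtain p :: "'d \<Rightarrow> 'k \<times> 'k" where bp: "bij_betw p UNIV ?P"
    using finite_same_card_bij[of "UNIV :: 'd set" ?P] by auto
  have pP: "\<exists>r. p r = (a,b)" if "e a < e b" for a b
    using bp that unfolding bij_betw_def by (metis (mono_tags, lifting) case_prodI image_iff mem_Collect_eq)
  let ?A = "\<lambda>i. (\<chi> r c. (if i = fst (p r) \<and> c = snd (p r) then 1 else 0)
                      - (if i = snd (p r) \<and> c = fst (p r) then 1 else 0)) :: real^'k^'d"
  have H: "(\<forall>x :: real^'k. \<exists>c :: 'k \<Rightarrow> real.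
              (\<exists>i. c i \<noteq> 0) \<and> (\<Sum>i\<in>UNIV. c i *\<^sub>R (?A i *v x)) = 0)
         \<and> (\<forall>x :: real^'k. x \<noteq> 0 \<longrightarrow>
              rank (\<Sum>i\<in>UNIV. (x $ i) *\<^sub>R ?A i) + 1 = CARD('k))"
    by (rule construction[of e p, OF inj pP])
  show ?thesis
    by (rule exI[of _ ?A]) (use H in \<open>auto simp del: One_nat_def\<close>)
qed

end
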